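(* Let $m\ge 2$ be an integer and let $G$ be a graph without isolated vertices containing no induced subgraph isomorphic to $K_{1,m}$. Then $\tilde{H}_k(\operatorname{ind}(G);\mathbf{k})=0$ for all \[k\le\left\lceil\frac{\dim(\operatorname{ind}(G))-2m+3}{m-1}\right\rceil.\]
   Context: All graphs are finite and simple; $\mathbf{k}$ is a fixed field. $K_{1,m}$ is the complete bipartite graph with parts of sizes $1$ and $m$. $\operatorname{ind}(G)$ is the simplicial complex on $V(G)$ whose faces are the independent sets of $G$; its dimension is one less than the maximum size of an independent set. $\tilde H_k$ denotes reduced simplicial homology with coefficients in $\mathbf{k}$. *)

theory Defs
  imports Complex_Main
begin

definition simple_graph :: "'a set \<Rightarrow> ('a \<Rightarrow> 'a \<Rightarrow> bool) \<Rightarrow> bool" where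
  "simple_graph V adj \<longleftrightarrow> finite V \<and>
     (\<forall>x y. adj x y \<longrightarrow> x \<in> V \<and> y \<in> V) \<and>
     (\<forall>x y. adj x y \<longrightarrow> adj y x) \<and> (\<forall>x. \<not> adj x x)"

definition no_isolated_vertices :: "'a set \<Rightarrow> ('a \<Rightarrow> 'a \<Rightarrow> bool) \<Rightarrow> bool" where
  "no_isolated_vertices V adj \<longleftrightarrow> (\<forall>v\<in>V. \<exists>u\<in>V. adj v u)"

definition has_induced_star :: "'a set \<Rightarrow> ('a \<Rightarrow> 'a \<Rightarrow> bool) \<Rightarrow> nat \<Rightarrow> bool" where
  "has_induced_star V adj m \<longleftrightarrow> (\<exists>c L. c \<in> V \<and> L \<subseteq> V \<and> c \<notin> L \<and> card L = m \<and>
     (\<forall>x\<in>L. adj c x) \<and> (\<forall>x\<in>L. \<forall>y\<in>L. \<not> adj x y))"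

definition independent_set :: "'a set \<Rightarrow> ('a \<Rightarrow> 'a \<Rightarrow> bool) \<Rightarrow> 'a set \<Rightarrow> bool" where
  "independent_set V adj S \<longleftrightarrow> S \<subseteq> V \<and> (\<forall>x\<in>S. \<forall>y\<in>S. \<not> adj x y)"

definition ind_complex :: "'a set \<Rightarrow> ('a \<Rightarrow> 'a \<Rightarrow> bool) \<Rightarrow> 'a set set" where
  "ind_complex V adj = {S. independent_set V adj S}"

definition complex_dim :: "'a set set \<Rightarrow> int" where
  "complex_dim K = int (Max (card ` K)) - 1"

(* The empty face is the
   unique (-1)-face, giving the augmented (reduced) chain complex. *)
definition chains :: "'a set set \<Rightarrow> int \<Rightarrow> ('a set \<Rightarrow> 'f::field) set" where
  "chains K k = {c. \<forall>\<sigma>. c \<sigma> \<noteq> 0 \<longrightarrow> \<sigma> \<in> K \<and> int (card \<sigma>) = k + 1}"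

(* Boundary map with the orientation induced by the linear order on vertices:
   d[v_0,...,v_k] = sum_i (-1)^i [v_0,..,^v_i,..,v_k].  Coefficient of tau in
   d c: sum over v not in tau with insert v tau a face; v sits at position
   card {u in tau. u < v} in the sorted simplex insert v tau. *)
definition boundary :: "'a::linorder set set \<Rightarrow> ('a set \<Rightarrow> 'f::field) \<Rightarrow> ('a set \<Rightarrow> 'f)" where
  "boundary K c = (\<lambda>\<tau>. if \<tau> \<in> K then
      (\<Sum>v\<in>(\<Union>K) - \<tau>. if insert v \<tau> \<in> K
          then (-1) ^ card {u\<in>\<tau>. u < v} * c (insert v \<tau>) else 0)
     else 0)"

definition reduced_homology_vanishes :: "'f::field itself \<Rightarrow> 'a::linorder set set \<Rightarrow> int \<Rightarrow> bool" where
  "reduced_homology_vanishes TYPE('f) K k \<longleftrightarrow>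
     (\<forall>c \<in> (chains K k :: ('a set \<Rightarrow> 'f) set). boundary K c = (\<lambda>_. 0) \<longrightarrow>
        (\<exists>d \<in> (chains K (k + 1) :: ('a set \<Rightarrow> 'f) set). boundary K d = c))"

end

theory Submission
  imports Defs
begin

definition sg :: "'a::linorder set \<Rightarrow> 'a \<Rightarrow> 'f::field" where
  "sg \<tau> u = (-1) ^ card {x\<in>\<tau>. x < u}"

lemma sg_sq: "(sg \<tau> u :: 'f::field) * sg \<tau> u = 1"
  by (simp add: sg_def flip: power_add)

lemma sg_nz: "(sg \<tau> u :: 'f::field) \<noteq> 0"
  by (simp add: sg_def)

lemma sg_insert:
  assumes "finite \<tau>" "u \<notin> \<tau>"
  shows "(sg (insert u \<tau>) v :: 'f::field) = sg \<tau> v * (if u < v then -1 else 1)"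
proof (cases "u < v")
  case True
  then have "{x\<in>insert u \<tau>. x < v} = insert u {x\<in>\<tau>. x < v}" by auto
  moreover have "card (insert u {x\<in>\<tau>. x < v}) = Suc (card {x\<in>\<tau>. x < v})"
    using assms by simp
  ultimately show ?thesis using True by (simp add: sg_def)
next
  case False
  then have "{x\<in>insert u \<tau>. x < v} = {x\<in>\<tau>. x < v}" by auto
  then show ?thesis using False by (simp add: sg_def)
qed

lemma bd_out: "\<tau> \<notin> K \<Longrightarrow> boundary K h \<tau> = 0"
  by (simp add: boundary_def)

lemma bd_cong: "(\<And>\<sigma>. \<sigma> \<in> K \<Longrightarrow> h \<sigma> = h' \<sigma>) \<Longrightarrow> boundary K h = boundary K h'"
  unfolding boundary_def by (intro ext) (auto intro!: sum.cong)

lemma bd_add: "boundary K (\<lambda>x. a x + b x) = (\<lambda>x. boundary K a x + boundary K b x)"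
proof (rule ext)
  fix x show "boundary K (\<lambda>x. a x + b x) x = boundary K a x + boundary K b x"
    unfolding boundary_def by (auto simp: sum.distrib[symmetric] algebra_simps intro!: sum.cong)
qed

lemma bd_scale: "boundary K (\<lambda>x. r * h x) = (\<lambda>x. r * boundary K h x)"
proof (rule ext)
  fix x show "boundary K (\<lambda>x. r * h x) x = r * boundary K h x"
    unfolding boundary_def by (auto simp: sum_distrib_left algebra_simps intro!: sum.cong)
qed

lemma bd_zero: "boundary K (\<lambda>_. 0::'f::field) = (\<lambda>_. 0)"
  unfolding boundary_def by (rule ext) (simp only: mult_zero_right if_cancel sum.neutral_const)

lemma chains_zero: "(\<lambda>_. 0) \<in> chains K k"
  by (simp add: chains_def)

locale gr =
  fixes adj :: "'a::linorder \<Rightarrow> 'a \<Rightarrow> bool"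
  assumes sym: "adj x y \<Longrightarrow> adj y x" and irr: "\<not> adj x x"
begin

abbreviation K where "K W \<equiv> ind_complex W adj"

definition Wl where "Wl v W = W - {v} - {u. adj v u}"

lemma K_iff: "S \<in> K W \<longleftrightarrow> S \<subseteq> W \<and> (\<forall>x\<in>S. \<forall>y\<in>S. \<not> adj x y)"
  by (simp add: ind_complex_def independent_set_def)

lemma Union_K: "\<Union>(K W) = W"
proof
  show "\<Union>(K W) \<subseteq> W" by (auto simp: K_iff)
  show "W \<subseteq> \<Union>(K W)"
  proof
    fix x assume "x \<in> W"
    then have "{x} \<in> K W" by (simp add: K_iff irr)
    then show "x \<in> \<Union>(K W)" by blast
  qed
qed

lemma K_finite: "finite W \<Longrightarrow> S \<in> K W \<Longrightarrow> finite S"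
  by (meson K_iff finite_subset)

lemma K_mono: "W \<subseteq> W' \<Longrightarrow> S \<in> K W \<Longrightarrow> S \<in> K W'"
  by (auto simp: K_iff)

lemma K_down: "S \<in> K W \<Longrightarrow> T \<subseteq> S \<Longrightarrow> T \<in> K W"
  by (auto simp: K_iff)

lemma Wl_sub: "Wl v W \<subseteq> W - {v}"
  by (auto simp: Wl_def)

lemma bd_eq: "\<tau> \<in> K W \<Longrightarrow> boundary (K W) h \<tau> =
   (\<Sum>u\<in>W-\<tau>. if insert u \<tau> \<in> K W then sg \<tau> u * h (insert u \<tau>) else 0)"
  unfolding boundary_def Union_K sg_def by simp

lemma insert_K: "v \<in> W \<Longrightarrow> v \<notin> \<tau> \<Longrightarrow> insert v \<tau> \<in> K W \<longleftrightarrow> \<tau> \<in> K (Wl v W)"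
  unfolding K_iff Wl_def using sym irr by blast

lemma bd_vface:
  assumes fin: "finite W" and v: "v \<in> W" and t: "\<tau> \<in> K (Wl v W)"
  shows "boundary (K W) (h :: 'a set \<Rightarrow> 'f::field) (insert v \<tau>) =
    (\<Sum>u\<in>Wl v W - \<tau>. if insert u \<tau> \<in> K (Wl v W)
        then sg \<tau> u * (if v < u then -1 else 1) * h (insert v (insert u \<tau>)) else 0)"
proof -
  have vt: "v \<notin> \<tau>" using t by (auto simp: K_iff Wl_def)
  have ft: "finite \<tau>" using t fin Wl_sub by (meson K_iff finite_Diff finite_subset)
  have iK: "insert v \<tau> \<in> K W" using insert_K[OF v vt] t by simp
  have "boundary (K W) h (insert v \<tau>) = (\<Sum>u\<in>W - insert v \<tau>. if insert u (insert v \<tau>) \<in> K W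
      then sg (insert v \<tau>) u * h (insert u (insert v \<tau>)) else 0)"
    using bd_eq[OF iK] .
  also have "\<dots> = (\<Sum>u\<in>Wl v W - \<tau>. if insert u \<tau> \<in> K (Wl v W)
        then sg \<tau> u * (if v < u then -1 else 1) * h (insert v (insert u \<tau>)) else 0)"
  proof (rule sum.mono_neutral_cong_right)
    show "finite (W - insert v \<tau>)" using fin by simp
    show "Wl v W - \<tau> \<subseteq> W - insert v \<tau>" by (auto simp: Wl_def)
    show "\<forall>u\<in>(W - insert v \<tau>) - (Wl v W - \<tau>). (if insert u (insert v \<tau>) \<in> K W
      then sg (insert v \<tau>) u * h (insert u (insert v \<tau>)) else 0) = 0"
    proof
      fix u assume u: "u \<in> (W - insert v \<tau>) - (Wl v W - \<tau>)"
      then have "adj v u" by (auto simp: Wl_def)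
      then have "insert u (insert v \<tau>) \<notin> K W" by (auto simp: K_iff)
      then show "(if insert u (insert v \<tau>) \<in> K W
        then sg (insert v \<tau>) u * h (insert u (insert v \<tau>)) else 0) = 0" by simp
    qed
    fix u assume u: "u \<in> Wl v W - \<tau>"
    then have uv: "u \<noteq> v" "v \<notin> insert u \<tau>" "u \<notin> \<tau>" using vt by (auto simp: Wl_def)
    have e1: "insert u (insert v \<tau>) = insert v (insert u \<tau>)" by auto
    have e2: "insert u (insert v \<tau>) \<in> K W \<longleftrightarrow> insert u \<tau> \<in> K (Wl v W)"
      using insert_K[OF v uv(2)] e1 by simp
    have e3: "(sg (insert v \<tau>) u :: 'f) = sg \<tau> u * (if v < u then -1 else 1)"
      using sg_insert[OF ft vt] .
    show "(if insert u (insert v \<tau>) \<in> K W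
      then sg (insert v \<tau>) u * h (insert u (insert v \<tau>)) else 0) =
      (if insert u \<tau> \<in> K (Wl v W)
        then sg \<tau> u * (if v < u then -1 else 1) * h (insert v (insert u \<tau>)) else 0)"
      using e1 e2 e3 by simp
  qed
  finally show ?thesis .
qed

definition T :: "'a \<Rightarrow> 'a set \<Rightarrow> ('a set \<Rightarrow> 'f::field) \<Rightarrow> 'a set \<Rightarrow> 'f" where
  "T v W h = (\<lambda>\<sigma>. if \<sigma> \<in> K (Wl v W) then sg \<sigma> v * h (insert v \<sigma>) else 0)"

lemma transfer:
  assumes fin: "finite W" and v: "v \<in> W" and t: "\<tau> \<in> K (Wl v W)"
  shows "boundary (K W) (h :: 'a set \<Rightarrow> 'f::field) (insert v \<tau>) =
     - sg \<tau> v * boundary (K (Wl v W)) (T v W h) \<tau>"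
proof -
  have vt: "v \<notin> \<tau>" using t by (auto simp: K_iff Wl_def)
  have ft: "finite \<tau>" using t fin Wl_sub by (meson K_iff finite_Diff finite_subset)
  have "boundary (K (Wl v W)) (T v W h) \<tau> = (\<Sum>u\<in>Wl v W - \<tau>. if insert u \<tau> \<in> K (Wl v W)
        then sg \<tau> u * T v W h (insert u \<tau>) else 0)"
    by (rule bd_eq[OF t])
  then have "- sg \<tau> v * boundary (K (Wl v W)) (T v W h) \<tau> = (\<Sum>u\<in>Wl v W - \<tau>. if insert u \<tau> \<in> K (Wl v W)
        then - sg \<tau> v * (sg \<tau> u * T v W h (insert u \<tau>)) else 0)"
    by (simp only: sum_distrib_left if_distrib mult_zero_right)
  also have "\<dots> = (\<Sum>u\<in>Wl v W - \<tau>. if insert u \<tau> \<in> K (Wl v W)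
        then sg \<tau> u * (if v < u then -1 else 1) * h (insert v (insert u \<tau>)) else 0)"
  proof (rule sum.cong[OF refl])
    fix u assume u: "u \<in> Wl v W - \<tau>"
    then have uv: "u \<noteq> v" "u \<notin> \<tau>" by (auto simp: Wl_def)
    have s: "(sg (insert u \<tau>) v :: 'f) = sg \<tau> v * (if u < v then -1 else 1)"
      using sg_insert[OF ft uv(2)] .
    have q: "(sg \<tau> v :: 'f) * sg \<tau> v = 1" by (rule sg_sq)
    show "(if insert u \<tau> \<in> K (Wl v W)
        then - sg \<tau> v * (sg \<tau> u * T v W h (insert u \<tau>)) else 0) =
      (if insert u \<tau> \<in> K (Wl v W)
        then sg \<tau> u * (if v < u then -1 else 1) * h (insert v (insert u \<tau>)) else 0)"
    proof (cases "insert u \<tau> \<in> K (Wl v W)")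
      case True
      have "- sg \<tau> v * (sg \<tau> u * T v W h (insert u \<tau>)) =
            - (sg \<tau> v * sg \<tau> v) * sg \<tau> u * (if u < v then -1 else 1) * h (insert v (insert u \<tau>))"
        using True s by (simp add: T_def algebra_simps)
      also have "\<dots> = sg \<tau> u * (if v < u then -1 else 1) * h (insert v (insert u \<tau>))"
        using uv(1) q by (cases "u < v") auto
      finally show ?thesis using True by simp
    qed simp
  qed
  also have "\<dots> = boundary (K W) h (insert v \<tau>)"
    by (rule bd_vface[OF fin v t, symmetric])
  finally show ?thesis by simp
qed

lemma subcomplex:
  assumes fin: "finite W2" and W12: "W1 \<subseteq> W2" and e: "e \<in> chains (K W1) j"
  shows "boundary (K W2) (e :: 'a set \<Rightarrow> 'f::field) \<tau> = (if \<tau> \<in> K W1 then boundary (K W1) e \<tau> else 0)"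
proof -
  have ez: "\<And>\<sigma>. \<sigma> \<notin> K W1 \<Longrightarrow> e \<sigma> = 0" using e by (auto simp: chains_def)
  show ?thesis
  proof (cases "\<tau> \<in> K W1")
    case True
    then have t2: "\<tau> \<in> K W2" using K_mono W12 by blast
    have "boundary (K W2) e \<tau> = (\<Sum>u\<in>W2-\<tau>. if insert u \<tau> \<in> K W2 then sg \<tau> u * e (insert u \<tau>) else 0)"
      by (rule bd_eq[OF t2])
    also have "\<dots> = (\<Sum>u\<in>W1-\<tau>. if insert u \<tau> \<in> K W1 then sg \<tau> u * e (insert u \<tau>) else 0)"
    proof (rule sum.mono_neutral_cong_right)
      show "finite (W2 - \<tau>)" using fin by simp
      show "W1 - \<tau> \<subseteq> W2 - \<tau>" using W12 by blast
      show "\<forall>u\<in>W2 - \<tau> - (W1 - \<tau>). (if insert u \<tau> \<in> K W2 then sg \<tau> u * e (insert u \<tau>) else 0) = 0"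
      proof
        fix u assume u: "u \<in> W2 - \<tau> - (W1 - \<tau>)"
        then have "insert u \<tau> \<notin> K W1" by (auto simp: K_iff)
        then show "(if insert u \<tau> \<in> K W2 then sg \<tau> u * e (insert u \<tau>) else 0) = 0"
          using ez by simp
      qed
      fix u assume "u \<in> W1 - \<tau>"
      show "(if insert u \<tau> \<in> K W2 then sg \<tau> u * e (insert u \<tau>) else 0) =
        (if insert u \<tau> \<in> K W1 then sg \<tau> u * e (insert u \<tau>) else 0)"
        using ez K_mono[OF W12] by auto
    qed
    also have "\<dots> = boundary (K W1) e \<tau>" by (rule bd_eq[OF True, symmetric])
    finally show ?thesis using True by simp
  next
    case False
    show ?thesis
    proof (cases "\<tau> \<in> K W2")
      case True
      have "boundary (K W2) e \<tau> = (\<Sum>u\<in>W2-\<tau>. if insert u \<tau> \<in> K W2 then sg \<tau> u * e (insert u \<tau>) else 0)"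
        by (rule bd_eq[OF True])
      also have "\<dots> = 0"
      proof (rule sum.neutral, rule ballI)
        fix u assume "u \<in> W2 - \<tau>"
        have "insert u \<tau> \<notin> K W1" using False K_down by blast
        then show "(if insert u \<tau> \<in> K W2 then sg \<tau> u * e (insert u \<tau>) else 0) = 0"
          using ez by simp
      qed
      finally show ?thesis using False by simp
    qed (simp add: bd_out False)
  qed
qed

lemma split_v:
  assumes fin: "finite W" and v: "v \<in> W" and t: "\<tau> \<in> K (W - {v})"
  shows "boundary (K W) (c :: 'a set \<Rightarrow> 'f::field) \<tau> =
    (if \<tau> \<in> K (Wl v W) then sg \<tau> v * c (insert v \<tau>) else 0) + boundary (K (W - {v})) c \<tau>"
proof -
  have vt: "v \<notin> \<tau>" using t by (auto simp: K_iff)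
  have tK: "\<tau> \<in> K W" using t K_mono by blast
  have "boundary (K W) c \<tau> = (\<Sum>u\<in>W-\<tau>. if insert u \<tau> \<in> K W then sg \<tau> u * c (insert u \<tau>) else 0)"
    by (rule bd_eq[OF tK])
  also have "\<dots> = (if insert v \<tau> \<in> K W then sg \<tau> v * c (insert v \<tau>) else 0) +
     (\<Sum>u\<in>W-\<tau>-{v}. if insert u \<tau> \<in> K W then sg \<tau> u * c (insert u \<tau>) else 0)"
    using fin v vt by (subst sum.remove[of _ v]) auto
  also have "W - \<tau> - {v} = (W - {v}) - \<tau>" by blast
  also have "(\<Sum>u\<in>(W - {v}) - \<tau>. if insert u \<tau> \<in> K W then sg \<tau> u * c (insert u \<tau>) else 0)
     = (\<Sum>u\<in>(W - {v}) - \<tau>. if insert u \<tau> \<in> K (W - {v}) then sg \<tau> u * c (insert u \<tau>) else 0)"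
  proof (rule sum.cong[OF refl])
    fix u assume "u \<in> (W - {v}) - \<tau>"
    then have "insert u \<tau> \<in> K W \<longleftrightarrow> insert u \<tau> \<in> K (W - {v})" using t by (auto simp: K_iff)
    then show "(if insert u \<tau> \<in> K W then sg \<tau> u * c (insert u \<tau>) else 0) =
      (if insert u \<tau> \<in> K (W - {v}) then sg \<tau> u * c (insert u \<tau>) else 0)" by simp
  qed
  also have "\<dots> = boundary (K (W - {v})) c \<tau>" by (rule bd_eq[OF t, symmetric])
  also have "(insert v \<tau> \<in> K W) = (\<tau> \<in> K (Wl v W))" by (rule insert_K[OF v vt])
  finally show ?thesis .
qed

lemma assemble:
  fixes c e :: "'a set \<Rightarrow> 'f::field"
  assumes fin: "finite W" and v: "v \<in> W"
    and c: "c \<in> chains (K W) k" and cc: "boundary (K W) c = (\<lambda>_. 0)"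
    and e: "e \<in> chains (K (Wl v W)) k" and ee: "boundary (K (Wl v W)) e = T v W c"
  defines "c' \<equiv> (\<lambda>\<tau>. if \<tau> \<in> K (W - {v}) then c \<tau> + e \<tau> else 0)"
  shows "c' \<in> chains (K (W - {v})) k" and "boundary (K (W - {v})) c' = (\<lambda>_. 0)"
    and "\<And>f. f \<in> chains (K (W - {v})) (k + 1) \<Longrightarrow> boundary (K (W - {v})) f = c' \<Longrightarrow>
          \<exists>g\<in>chains (K W) (k + 1). boundary (K W) g = c"
proof -
  let ?L = "K (Wl v W)" and ?K' = "K (W - {v})"
  have Lsub: "Wl v W \<subseteq> W - {v}" by (rule Wl_sub)
  have ez: "\<And>\<sigma>. \<sigma> \<notin> ?L \<Longrightarrow> e \<sigma> = 0" using e by (auto simp: chains_def)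
  have cz: "\<And>\<sigma>. \<sigma> \<notin> K W \<Longrightarrow> c \<sigma> = 0" using c by (auto simp: chains_def)
  show "c' \<in> chains ?K' k"
    unfolding chains_def c'_def
  proof (intro CollectI allI impI)
    fix \<sigma> assume h: "(if \<sigma> \<in> ?K' then c \<sigma> + e \<sigma> else 0) \<noteq> 0"
    then have s: "\<sigma> \<in> ?K'" "c \<sigma> + e \<sigma> \<noteq> 0" by (auto split: if_splits)
    then have "c \<sigma> \<noteq> 0 \<or> e \<sigma> \<noteq> 0" by auto
    then have "int (card \<sigma>) = k + 1" using c e by (auto simp: chains_def)
    then show "\<sigma> \<in> ?K' \<and> int (card \<sigma>) = k + 1" using s by simp
  qed
  show "boundary ?K' c' = (\<lambda>_. 0)"
  proof (rule ext)
    fix \<tau>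
    show "boundary ?K' c' \<tau> = 0"
    proof (cases "\<tau> \<in> ?K'")
      case False then show ?thesis by (simp add: bd_out)
    next
      case True
      have "boundary ?K' c' = boundary ?K' (\<lambda>x. c x + e x)"
        by (rule bd_cong) (simp add: c'_def)
      then have "boundary ?K' c' \<tau> = boundary ?K' c \<tau> + boundary ?K' e \<tau>"
        by (simp add: bd_add)
      moreover have "0 = (if \<tau> \<in> ?L then sg \<tau> v * c (insert v \<tau>) else 0) + boundary ?K' c \<tau>"
        using split_v[OF fin v True, of c] cc by (metis)
      moreover have "boundary ?K' e \<tau> = (if \<tau> \<in> ?L then boundary ?L e \<tau> else 0)"
        using subcomplex[OF _ Lsub e] fin by simp
      moreover have "\<tau> \<in> ?L \<Longrightarrow> boundary ?L e \<tau> = sg \<tau> v * c (insert v \<tau>)"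
        using ee by (simp add: T_def)
      ultimately show ?thesis by (cases "\<tau> \<in> ?L") (simp_all add: algebra_simps)
    qed
  qed
  define d where "d = (\<lambda>\<sigma>. if v \<in> \<sigma> \<and> \<sigma> - {v} \<in> ?L then - sg (\<sigma> - {v}) v * e (\<sigma> - {v}) else 0)"
  have dchain: "d \<in> chains (K W) (k + 1)"
    unfolding chains_def
  proof (intro CollectI allI impI)
    fix \<sigma> assume "d \<sigma> \<noteq> 0"
    then have s: "v \<in> \<sigma>" "\<sigma> - {v} \<in> ?L" "e (\<sigma> - {v}) \<noteq> 0" by (auto simp: d_def split: if_splits)
    have "\<sigma> = insert v (\<sigma> - {v})" using s by blast
    then have sK: "\<sigma> \<in> K W" using insert_K[OF v, of "\<sigma> - {v}"] s by auto
    have "int (card (\<sigma> - {v})) = k + 1" using e s by (auto simp: chains_def)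
    moreover have "finite \<sigma>" using sK fin K_finite by blast
    moreover have "card \<sigma> > 0" using s \<open>finite \<sigma>\<close> card_gt_0_iff by blast
    ultimately have "int (card \<sigma>) = k + 2" using s by (simp add: card_Diff_singleton of_nat_diff)
    then show "\<sigma> \<in> K W \<and> int (card \<sigma>) = k + 1 + 1" using sK by simp
  qed
  have fact1: "\<And>\<tau>. \<tau> \<in> ?L \<Longrightarrow> boundary (K W) d (insert v \<tau>) = c (insert v \<tau>)"
  proof -
    fix \<tau> assume t: "\<tau> \<in> ?L"
    have "boundary ?L (T v W d) = boundary ?L (\<lambda>x. (-1) * e x)"
    proof (rule bd_cong)
      fix \<sigma> assume s: "\<sigma> \<in> ?L"
      then have vs: "v \<notin> \<sigma>" by (auto simp: K_iff Wl_def)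
      have "insert v \<sigma> - {v} = \<sigma>" using vs by auto
      then show "T v W d \<sigma> = (-1) * e \<sigma>"
        using s sg_sq[of \<sigma> v, where 'f='f] by (simp add: T_def d_def algebra_simps)
    qed
    then have "boundary ?L (T v W d) \<tau> = - boundary ?L e \<tau>" by (simp only: bd_scale) simp
    also have "\<dots> = - (sg \<tau> v * c (insert v \<tau>))" using ee t by (simp add: T_def)
    finally show "boundary (K W) d (insert v \<tau>) = c (insert v \<tau>)"
      using transfer[OF fin v t, of d] sg_sq[of \<tau> v, where 'f='f] by (simp add: algebra_simps)
  qed
  have fact2: "\<And>\<tau>. \<tau> \<in> ?K' \<Longrightarrow> boundary (K W) d \<tau> = - e \<tau>"
  proof -
    fix \<tau> assume t: "\<tau> \<in> ?K'"
    have "boundary (K W) d \<tau> = (if \<tau> \<in> ?L then sg \<tau> v * d (insert v \<tau>) else 0) + boundary ?K' d \<tau>"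
      by (rule split_v[OF fin v t])
    moreover have "boundary ?K' d = boundary ?K' (\<lambda>_. 0)"
      by (rule bd_cong) (auto simp: d_def K_iff)
    moreover have vt: "v \<notin> \<tau>" using t by (auto simp: K_iff)
    moreover have "insert v \<tau> - {v} = \<tau>" using vt by auto
    ultimately show "boundary (K W) d \<tau> = - e \<tau>"
      using sg_sq[of \<tau> v, where 'f='f] ez[of \<tau>] by (auto simp: bd_zero d_def algebra_simps)
  qed
  have fact3: "\<And>\<sigma>. c \<sigma> = boundary (K W) d \<sigma> + c' \<sigma>"
  proof -
    fix \<sigma>
    show "c \<sigma> = boundary (K W) d \<sigma> + c' \<sigma>"
    proof (cases "\<sigma> \<in> K W")
      case False
      then have "\<sigma> \<notin> ?K'" using K_mono[of "W - {v}" W] by blast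
      then show ?thesis using False cz by (simp add: bd_out c'_def)
    next
      case True
      show ?thesis
      proof (cases "v \<in> \<sigma>")
        case vs: True
        then have e1: "\<sigma> = insert v (\<sigma> - {v})" by blast
        then have "\<sigma> - {v} \<in> ?L" using True insert_K[OF v, of "\<sigma> - {v}"] by auto
        then have "boundary (K W) d \<sigma> = c \<sigma>" using fact1 e1 by metis
        moreover have "\<sigma> \<notin> ?K'" using vs by (auto simp: K_iff)
        ultimately show ?thesis by (simp add: c'_def)
      next
        case False
        then have "\<sigma> \<in> ?K'" using True by (auto simp: K_iff)
        then show ?thesis using fact2 by (simp add: c'_def)
      qed
    qed
  qed
  fix f assume f: "f \<in> chains ?K' (k + 1)" and ff: "boundary ?K' f = c'"
  have fK: "f \<in> chains (K W) (k + 1)" using f K_mono[of "W - {v}" W] by (auto simp: chains_def)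
  have bf: "boundary (K W) f = c'"
  proof (rule ext)
    fix \<tau>
    show "boundary (K W) f \<tau> = c' \<tau>"
      using subcomplex[OF fin _ f, of \<tau>] ff by (auto simp: c'_def)
  qed
  show "\<exists>g\<in>chains (K W) (k + 1). boundary (K W) g = c"
  proof (intro bexI)
    show "boundary (K W) (\<lambda>x. d x + f x) = c"
      using fact3 bf by (simp add: bd_add fun_eq_iff)
    show "(\<lambda>x. d x + f x) \<in> chains (K W) (k + 1)"
      unfolding chains_def
    proof (intro CollectI allI impI)
      fix \<sigma> assume "d \<sigma> + f \<sigma> \<noteq> 0"
      then have "d \<sigma> \<noteq> 0 \<or> f \<sigma> \<noteq> 0" by auto
      then show "\<sigma> \<in> K W \<and> int (card \<sigma>) = k + 1 + 1" using dchain fK by (auto simp: chains_def)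
    qed
  qed
qed

lemma T_chain:
  assumes fin: "finite W" and v: "v \<in> W" and c: "(c :: 'a set \<Rightarrow> 'f::field) \<in> chains (K W) k"
  shows "T v W c \<in> chains (K (Wl v W)) (k - 1)"
  unfolding chains_def
proof (intro CollectI allI impI)
  fix \<sigma> assume h: "T v W c \<sigma> \<noteq> 0"
  then have s: "\<sigma> \<in> K (Wl v W)" "c (insert v \<sigma>) \<noteq> 0" by (auto simp: T_def split: if_splits)
  have vs: "v \<notin> \<sigma>" using s by (auto simp: K_iff Wl_def)
  have fs: "finite \<sigma>" using s fin Wl_sub by (meson K_iff finite_Diff finite_subset)
  have "int (card (insert v \<sigma>)) = k + 1" using c s by (auto simp: chains_def)
  then have "int (card \<sigma>) = k - 1 + 1" using vs fs by simp
  then show "\<sigma> \<in> K (Wl v W) \<and> int (card \<sigma>) = k - 1 + 1" using s by simp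
qed

lemma T_cycle:
  assumes fin: "finite W" and v: "v \<in> W" and cc: "boundary (K W) (c :: 'a set \<Rightarrow> 'f::field) = (\<lambda>_. 0)"
  shows "boundary (K (Wl v W)) (T v W c) = (\<lambda>_. 0)"
proof (rule ext)
  fix \<tau> show "boundary (K (Wl v W)) (T v W c) \<tau> = 0"
  proof (cases "\<tau> \<in> K (Wl v W)")
    case True
    have "0 = - sg \<tau> v * boundary (K (Wl v W)) (T v W c) \<tau>"
      using transfer[OF fin v True, of c] cc by metis
    then show ?thesis using sg_nz[of \<tau> v, where 'f='f] by simp
  qed (simp add: bd_out)
qed

lemma step:
  assumes fin: "finite W" and v: "v \<in> W"
    and HL: "reduced_homology_vanishes TYPE('f::field) (K (Wl v W)) (k - 1)"
    and HK: "reduced_homology_vanishes TYPE('f) (K (W - {v})) k"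
  shows "reduced_homology_vanishes TYPE('f) (K W) k"
  unfolding reduced_homology_vanishes_def
proof (intro ballI impI)
  fix c :: "'a set \<Rightarrow> 'f" assume c: "c \<in> chains (K W) k" and cc: "boundary (K W) c = (\<lambda>_. 0)"
  obtain e where e: "e \<in> (chains (K (Wl v W)) (k - 1 + 1) :: ('a set \<Rightarrow> 'f) set)"
      and ee: "boundary (K (Wl v W)) e = T v W c"
    using HL T_chain[OF fin v c] T_cycle[OF fin v cc] unfolding reduced_homology_vanishes_def by blast
  have e': "e \<in> chains (K (Wl v W)) k" using e by simp
  note A = assemble[OF fin v c cc e' ee]
  obtain f where f: "f \<in> (chains (K (W - {v})) (k + 1) :: ('a set \<Rightarrow> 'f) set)"
      and ff: "boundary (K (W - {v})) f = (\<lambda>\<tau>. if \<tau> \<in> K (W - {v}) then c \<tau> + e \<tau> else 0)"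
    using HK A(1,2) unfolding reduced_homology_vanishes_def by blast
  show "\<exists>d\<in>chains (K W) (k + 1). boundary (K W) d = c" using A(3)[OF f ff] .
qed

lemma cone:
  assumes fin: "finite W" and v: "v \<in> W" and iso: "\<forall>u\<in>W. \<not> adj v u"
  shows "reduced_homology_vanishes TYPE('f::field) (K W) k"
  unfolding reduced_homology_vanishes_def
proof (intro ballI impI)
  fix c :: "'a set \<Rightarrow> 'f" assume c: "c \<in> chains (K W) k" and cc: "boundary (K W) c = (\<lambda>_. 0)"
  have Weq: "Wl v W = W - {v}" using iso by (auto simp: Wl_def)
  define e where "e = (\<lambda>\<sigma>. if \<sigma> \<in> K (Wl v W) then - c \<sigma> else 0)"
  have e: "e \<in> chains (K (Wl v W)) k" using c by (auto simp: chains_def e_def)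
  have ee: "boundary (K (Wl v W)) e = T v W c"
  proof (rule ext)
    fix \<tau> show "boundary (K (Wl v W)) e \<tau> = T v W c \<tau>"
    proof (cases "\<tau> \<in> K (Wl v W)")
      case True
      have "boundary (K (Wl v W)) e = boundary (K (Wl v W)) (\<lambda>x. (-1) * c x)"
        by (rule bd_cong) (simp add: e_def)
      then have "boundary (K (Wl v W)) e \<tau> = - boundary (K (Wl v W)) c \<tau>"
        by (simp only: bd_scale) simp
      moreover have t': "\<tau> \<in> K (W - {v})" using True Weq by simp
      moreover have "0 = sg \<tau> v * c (insert v \<tau>) + boundary (K (W - {v})) c \<tau>"
        using split_v[OF fin v t', of c] cc True by metis
      then have "- boundary (K (W - {v})) c \<tau> = sg \<tau> v * c (insert v \<tau>)"
        by (metis add.commute neg_eq_iff_add_eq_0)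
      ultimately show ?thesis using True Weq by (simp add: T_def algebra_simps)
    qed (simp add: bd_out T_def)
  qed
  note A = assemble[OF fin v c cc e ee]
  have c'0: "(\<lambda>\<tau>. if \<tau> \<in> K (W - {v}) then c \<tau> + e \<tau> else 0) = (\<lambda>_. 0)"
    using Weq by (auto simp: e_def fun_eq_iff)
  show "\<exists>d\<in>chains (K W) (k + 1). boundary (K W) d = c"
    by (rule A(3)[OF chains_zero]) (simp add: c'0 bd_zero)
qed

lemma trivial:
  assumes "k \<le> -2"
  shows "reduced_homology_vanishes TYPE('f::field) KK k"
  unfolding reduced_homology_vanishes_def
proof (intro ballI impI)
  fix c :: "'b::linorder set \<Rightarrow> 'f" assume c: "c \<in> chains KK k"
  have "c = (\<lambda>_. 0)"
  proof (rule ext, rule ccontr)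
    fix \<sigma> assume "c \<sigma> \<noteq> 0"
    then have "int (card \<sigma>) = k + 1" using c by (auto simp: chains_def)
    then show False using assms by simp
  qed
  then have c0: "c = (\<lambda>_. 0)" .
  show "\<exists>d\<in>chains KK (k + 1). boundary KK d = c"
  proof (rule bexI[where x="\<lambda>_. 0"])
    show "boundary KK (\<lambda>_. 0::'f) = c" using \<open>c = (\<lambda>_. 0)\<close> bd_zero by simp
  qed (rule chains_zero)
qed

lemma main:
  assumes finV: "finite V" and m: "m \<ge> 2"
    and ns: "\<And>v S. v \<in> V \<Longrightarrow> S \<subseteq> V \<Longrightarrow> (\<forall>x\<in>S. adj v x) \<Longrightarrow> (\<forall>x\<in>S. \<forall>y\<in>S. \<not> adj x y) \<Longrightarrow> card S < m"
  shows "W \<subseteq> V \<Longrightarrow> I \<in> K W \<Longrightarrow> (k + 1) * (int m - 1) + 1 \<le> int (card I) \<Longrightarrow>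
     reduced_homology_vanishes TYPE('f::field) (K W) k"
proof (induction "card W" arbitrary: W I k rule: less_induct)
  case less
  have finW: "finite W" using less.prems(1) finV finite_subset by blast
  show ?case
  proof (cases "k \<le> -2")
    case True then show ?thesis by (rule trivial)
  next
    case False
    then have "k + 1 \<ge> 0" by simp
    moreover have "int m - 1 \<ge> 0" using m by simp
    ultimately have X: "(k + 1) * (int m - 1) \<ge> 0" by (rule mult_nonneg_nonneg)
    have Ine: "I \<noteq> {}"
    proof
      assume "I = {}"
      then show False using less.prems(3) X by simp
    qed
    show ?thesis
    proof (cases "\<exists>v\<in>W. \<forall>u\<in>W. \<not> adj v u")
      case True
      then obtain v where "v \<in> W" "\<forall>u\<in>W. \<not> adj v u" by blast
      then show ?thesis by (rule cone[OF finW])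
    next
      case noiso: False
      have "\<exists>v\<in>W. v \<notin> I"
      proof (rule ccontr)
        assume "\<not> (\<exists>v\<in>W. v \<notin> I)"
        then have WI: "W \<subseteq> I" by blast
        obtain x where x: "x \<in> I" using Ine by blast
        have Ii: "I \<subseteq> W" "\<forall>x\<in>I. \<forall>y\<in>I. \<not> adj x y" using less.prems(2) by (simp_all add: K_iff)
        have "x \<in> W" "\<forall>u\<in>W. \<not> adj x u" using WI x Ii by blast+
        then show False using noiso by blast
      qed
      then obtain v where v: "v \<in> W" "v \<notin> I" by blast
      have IW: "I \<subseteq> W" using less.prems(2) by (simp add: K_iff)
      have finI: "finite I" using IW finW finite_subset by blast
      have c1: "card (W - {v}) < card W" using finW v(1) by (meson card_Diff1_less)
      have IH1: "reduced_homology_vanishes TYPE('f) (K (W - {v})) k"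
      proof -
        have "I \<in> K (W - {v})" using less.prems(2) v(2) unfolding K_iff by blast
        moreover have "W - {v} \<subseteq> V" using less.prems(1) by blast
        ultimately show ?thesis using less.hyps[OF c1, of I k] less.prems(3) by blast
      qed
      define I' where "I' = I - {u. adj v u}"
      have I'K: "I' \<in> K (Wl v W)" using less.prems(2) v unfolding K_iff Wl_def I'_def by blast
      have cs: "card I = card (I \<inter> {u. adj v u}) + card I'"
        unfolding I'_def by (rule card_Int_Diff[OF finI])
      have "card (I \<inter> {u. adj v u}) < m"
      proof (rule ns)
        show "v \<in> V" using v(1) less.prems(1) by blast
        show "I \<inter> {u. adj v u} \<subseteq> V" using IW less.prems(1) by blast
        show "\<forall>x\<in>I \<inter> {u. adj v u}. adj v x" by blast
        show "\<forall>x\<in>I \<inter> {u. adj v u}. \<forall>y\<in>I \<inter> {u. adj v u}. \<not> adj x y"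
          using less.prems(2) unfolding K_iff by blast
      qed
      moreover have "(k - 1 + 1) * (int m - 1) = (k + 1) * (int m - 1) - (int m - 1)"
        by (simp add: algebra_simps)
      ultimately have bnd: "(k - 1 + 1) * (int m - 1) + 1 \<le> int (card I')"
        using cs less.prems(3) by linarith
      have c2: "card (Wl v W) < card W"
        using c1 Wl_sub finW by (meson card_mono finite_Diff le_less_trans)
      have IH2: "reduced_homology_vanishes TYPE('f) (K (Wl v W)) (k - 1)"
      proof -
        have "Wl v W \<subseteq> V" using less.prems(1) Wl_sub by blast
        then show ?thesis using less.hyps[OF c2, of I' "k - 1"] I'K bnd by blast
      qed
      show ?thesis by (rule step[OF finW v(1) IH2 IH1])
    qed
  qed
qed

end

theorem corollary6p11:
  fixes V :: "'a::linorder set" and adj :: "'a \<Rightarrow> 'a \<Rightarrow> bool" and m :: nat and k :: int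
  assumes "simple_graph V adj"
    and "m \<ge> 2"
    and "no_isolated_vertices V adj"
    and "\<not> has_induced_star V adj m"
    and "k \<le> \<lceil>(real_of_int (complex_dim (ind_complex V adj)) - 2 * real m + 3) / (real m - 1)\<rceil>"
  shows "reduced_homology_vanishes TYPE('f::field) (ind_complex V adj) k"
proof -
  have sg: "finite V" "\<And>x y. adj x y \<Longrightarrow> x \<in> V \<and> y \<in> V" "\<And>x y. adj x y \<Longrightarrow> adj y x" "\<And>x. \<not> adj x x"
    using assms(1) unfolding simple_graph_def by blast+
  interpret gr adj
  proof
    show "\<And>x y. adj x y \<Longrightarrow> adj y x" by (rule sg(3))
    show "\<And>x. \<not> adj x x" by (rule sg(4))
  qed
  have ns: "card S < m" if v: "v \<in> V" and S: "S \<subseteq> V" and a: "\<forall>x\<in>S. adj v x"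
    and ind: "\<forall>x\<in>S. \<forall>y\<in>S. \<not> adj x y" for v S
  proof (rule ccontr)
    assume "\<not> card S < m"
    then have "m \<le> card S" by simp
    then obtain L where L: "L \<subseteq> S" "card L = m" "finite L" by (rule obtain_subset_with_card_n)
    have "v \<notin> L" using L(1) a sg(4) by blast
    then have "has_induced_star V adj m"
      unfolding has_induced_star_def
    proof (intro exI conjI)
      show "v \<in> V" by (rule v)
      show "L \<subseteq> V" using L(1) S by (rule subset_trans)
      show "v \<notin> L" by fact
      show "card L = m" by (rule L(2))
      show "\<forall>x\<in>L. adj v x" using L(1) a by blast
      show "\<forall>x\<in>L. \<forall>y\<in>L. \<not> adj x y" using L(1) ind by blast
    qed
    then show False using assms(4) by blast
  qed
  have finK: "finite (K V)"
    by (rule finite_subset[of _ "Pow V"]) (auto simp: K_iff sg(1))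
  have eK: "{} \<in> K V" by (simp add: K_iff)
  define a where "a = Max (card ` K V)"
  have "a \<in> card ` K V" unfolding a_def using finK eK by (intro Max_in) auto
  then obtain I where I: "I \<in> K V" "card I = a" by auto
  have dim: "complex_dim (K V) = int a - 1" by (simp add: complex_dim_def a_def)
  have mpos: "real m - 1 > 0" using assms(2) by simp
  have "real_of_int k - 1 < (real_of_int (int a - 1) - 2 * real m + 3) / (real m - 1)"
    using assms(5) unfolding dim le_ceiling_iff .
  then have "(real_of_int k - 1) * (real m - 1) < real_of_int (int a - 1) - 2 * real m + 3"
    using mpos by (simp add: pos_less_divide_eq)
  moreover have "real_of_int ((k - 1) * (int m - 1)) = (real_of_int k - 1) * (real m - 1)"
    by simp
  moreover have "real_of_int (int a - 2 * int m + 2) = real_of_int (int a - 1) - 2 * real m + 3"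
    by simp
  ultimately have "real_of_int ((k - 1) * (int m - 1)) < real_of_int (int a - 2 * int m + 2)"
    by simp
  then have "(k - 1) * (int m - 1) < int a - 2 * int m + 2" by (simp only: of_int_less_iff)
  moreover have "(k + 1) * (int m - 1) = (k - 1) * (int m - 1) + 2 * int m - 2"
    by (simp add: algebra_simps)
  ultimately have bnd: "(k + 1) * (int m - 1) + 1 \<le> int (card I)" using I(2) by linarith
  show ?thesis
    by (rule main[OF sg(1) assms(2) ns subset_refl I(1) bnd])
qed

end
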